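(* Let $d,k$ be positive integers and $C>0$. Let $z:\mathcal X\to\mathbb R^d$ be a fixed map from individual records to vectors with $\|z(x)\|_2\le C$ for all $x$ (for the remove/add relation $\sim_R$), respectively $\|z(x)\|_2\le C/2$ for all $x$ (for the substitution relation $\sim_S$). Consider the randomised algorithm which, on a dataset $D=(x_1,\dots,x_n)$, (1) draws a matrix $P\in\mathbb R^{d\times k}$ whose entries are independent $\mathcal N(0,1/k)$ random variables, (2) forms $\tilde z=\sum_{x\in D}P^{T}z(x)\in\mathbb R^k$, and (3) returns $\mathcal G(\tilde z)$, where $\mathcal G:\mathbb R^k\to\mathcal R$ is a Gaussian mechanism $\mathcal G(y)=y+\mathcal N(0,\sigma^2 I_k)$ that is $(\epsilon,\delta)$-DP for sensitivity-$\tilde C$ queries. Let $\tilde C>0$ and $\delta'>0$ satisfy $$\mathbb P\Big[\,\Gamma\big(K=\tfrac k2,\ \theta=\tfrac{2C^2}{k}\big)\le \tilde C^2\Big]\ \ge\ 1-\delta',$$ where $\Gamma(K,\theta)$ denotes a Gamma random variable with shape $K$ and scale $\theta$. Then the algorithm is $(\epsilon,\delta+\delta')$-differentially private (with respect to $\sim_R$, respectively $\sim_S$).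
   Context: A randomised mechanism $\mathcal M:\mathcal D\to\mathcal R$ is $(\epsilon,\delta)$-DP ($\epsilon>0$, $\delta\in[0,1]$) if for all neighbouring datasets $D\sim D'$ and all measurable $E\subseteq\mathcal R$, $P(\mathcal M(D)\in E)\le e^{\epsilon}P(\mathcal M(D')\in E)+\delta$. Two neighbouring relations are used: $D\sim_S D'$ (substitution) if $|D|=|D'|$ and they differ in exactly one element; $D\sim_R D'$ (remove/add) if one is obtained from the other by removing or adding a single element. A mechanism $\mathcal G:\mathbb R^k\to\mathcal R$ is said to be $(\epsilon,\delta)$-DP for sensitivity-$\tilde C$ queries if for all $y,y'\in\mathbb R^k$ with $\|y-y'\|_2\le\tilde C$ and all measurable $E$, $P(\mathcal G(y)\in E)\le e^{\epsilon}P(\mathcal G(y')\in E)+\delta$. *)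

theory Defs
  imports "HOL-Probability.Probability"
begin

definition dp :: "('x list \<Rightarrow> 'b measure) \<Rightarrow> ('x list \<Rightarrow> 'x list \<Rightarrow> bool) \<Rightarrow> real \<Rightarrow> real \<Rightarrow> bool" where
  "dp M rel eps delta \<longleftrightarrow>
     (\<forall>D D'. rel D D' \<longrightarrow>
        (\<forall>E \<in> sets (M D). measure (M D) E \<le> exp eps * measure (M D') E + delta))"

definition dp_sens :: "('a::real_normed_vector \<Rightarrow> 'b measure) \<Rightarrow> real \<Rightarrow> real \<Rightarrow> real \<Rightarrow> bool" where
  "dp_sens G eps delta Ct \<longleftrightarrow>
     (\<forall>y y'. norm (y - y') \<le> Ct \<longrightarrow>
        (\<forall>E \<in> sets (G y). measure (G y) E \<le> exp eps * measure (G y') E + delta))"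

definition subst_rel :: "'x list \<Rightarrow> 'x list \<Rightarrow> bool" where
  "subst_rel D D' \<longleftrightarrow> length D = length D' \<and> card {i. i < length D \<and> D ! i \<noteq> D' ! i} = 1"

definition remadd_rel :: "'x list \<Rightarrow> 'x list \<Rightarrow> bool" where
  "remadd_rel D D' \<longleftrightarrow>
     (\<exists>i < length D. D' = take i D @ drop (Suc i) D) \<or>
     (\<exists>i < length D'. D = take i D' @ drop (Suc i) D')"

definition gamma_density :: "real \<Rightarrow> real \<Rightarrow> real \<Rightarrow> real" where
  "gamma_density K theta x =
     (if x > 0 then x powr (K - 1) * exp (- x / theta) / (Gamma K * theta powr K) else 0)"

definition gamma_measure :: "real \<Rightarrow> real \<Rightarrow> real measure" where
  "gamma_measure K theta = density lborel (gamma_density K theta)"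

text \<open>Random d x k matrix with independent N(0, 1/k) entries; P(i,j) is the entry in row i, column j.\<close>
definition gauss_matrix :: "('d::finite \<times> 'k::finite \<Rightarrow> real) measure" where
  "gauss_matrix = PiM UNIV (\<lambda>_. density lborel (normal_density 0 (sqrt (1 / real CARD('k)))))"

definition gauss_mech :: "real \<Rightarrow> real^'k \<Rightarrow> (real^'k) measure" where
  "gauss_mech sg y =
     distr (PiM UNIV (\<lambda>_::'k. density lborel (normal_density 0 sg))) borel
       (\<lambda>w. y + (\<chi> j. w j))"

definition proj_sum :: "('d::finite \<times> 'k::finite \<Rightarrow> real) \<Rightarrow> ('x \<Rightarrow> real^'d) \<Rightarrow> 'x list \<Rightarrow> real^'k" where
  "proj_sum P z D = (\<Sum>x\<leftarrow>D. (\<chi> j. \<Sum>i\<in>UNIV. P (i, j) * z x $ i))"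

definition proj_alg :: "('x \<Rightarrow> real^'d::finite) \<Rightarrow> real \<Rightarrow> 'x list \<Rightarrow> (real^'k::finite) measure" where
  "proj_alg z sg D =
     Giry_Monad.bind (gauss_matrix :: ('d \<times> 'k \<Rightarrow> real) measure)
       (\<lambda>P. gauss_mech sg (proj_sum P z D))"

end

theory Submission
  imports Defs "HOL-Analysis.Analysis"
begin

lemma beta_nn:
  assumes "a > 0" "b > (0::real)"
  shows "(\<integral>\<^sup>+t. ennreal (t powr (a-1) * (1-t) powr (b-1) * indicator {0<..<1} t) \<partial>lborel) = ennreal (Beta a b)"
proof -
  have "(\<integral>\<^sup>+t. ennreal (t powr (a-1) * (1-t) powr (b-1)) * indicator {0..1} t \<partial>lborel) = ennreal (Beta a b)"
    by (rule nn_integral_has_integral_lebesgue'[OF _ has_integral_Beta_real[OF assms]]) auto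
  moreover have "ennreal (t powr (a-1) * (1-t) powr (b-1) * indicator {0<..<1} t) =
     ennreal (t powr (a-1) * (1-t) powr (b-1)) * indicator {0..1} t" for t
    by (cases "t = 0 \<or> t = 1") (auto simp: indicator_def)
  ultimately show ?thesis by simp
qed

lemma gamma_density_nonneg[simp]: "K > 0 \<Longrightarrow> theta > 0 \<Longrightarrow> 0 \<le> gamma_density K theta x"
  by (auto simp: gamma_density_def)

lemma borel_measurable_gamma_density[measurable]: "gamma_density K theta \<in> borel_measurable borel"
  unfolding gamma_density_def by measurable

lemma conv_gamma_density:
  assumes a: "a > 0" and b: "b > 0" and th: "theta > 0"
  shows "(\<lambda>x. \<integral>\<^sup>+y. ennreal (gamma_density a theta (x - y)) * ennreal (gamma_density b theta y) \<partial>lborel)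
     = (\<lambda>x. ennreal (gamma_density (a + b) theta x))"
proof
  fix x :: real
  show "(\<integral>\<^sup>+y. ennreal (gamma_density a theta (x - y)) * ennreal (gamma_density b theta y) \<partial>lborel)
     = ennreal (gamma_density (a + b) theta x)"
  proof (cases "x > 0")
    case False
    have z: "ennreal (gamma_density a theta (x - y)) * ennreal (gamma_density b theta y) = 0" for y
      using False by (auto simp: gamma_density_def)
    have "(\<integral>\<^sup>+y. ennreal (gamma_density a theta (x - y)) * ennreal (gamma_density b theta y) \<partial>lborel) = 0"
      by (simp add: z)
    then show ?thesis using False by (simp add: gamma_density_def)
  next
    case x: True
    define c where "c = exp (- x / theta) / (Gamma a * theta powr a * (Gamma b * theta powr b))"
    have c: "c \<ge> 0" using a b th by (simp add: c_def)
    have "(\<integral>\<^sup>+y. ennreal (gamma_density a theta (x - y)) * ennreal (gamma_density b theta y) \<partial>lborel)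
       = (\<integral>\<^sup>+y. ennreal (c * ((x-y) powr (a-1) * y powr (b-1) * indicator {0<..<x} y)) \<partial>lborel)"
    proof (intro nn_integral_cong)
      fix y :: real
      show "ennreal (gamma_density a theta (x - y)) * ennreal (gamma_density b theta y)
         = ennreal (c * ((x-y) powr (a-1) * y powr (b-1) * indicator {0<..<x} y))"
      proof (cases "0 < y \<and> y < x")
        case True
        have "exp (- (x - y) / theta) * exp (- y / theta) = exp (- x / theta)"
          by (simp add: mult_exp_exp diff_divide_distrib)
        then have "gamma_density a theta (x - y) * gamma_density b theta y
          = c * ((x-y) powr (a-1) * y powr (b-1))"
          using True a b th by (simp add: gamma_density_def c_def field_simps)
        then show ?thesis using True a b th
          by (simp add: ennreal_mult'[symmetric] indicator_def)
      next
        case False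
        then show ?thesis by (auto simp: gamma_density_def indicator_def)
      qed
    qed
    also have "\<dots> = ennreal x * (\<integral>\<^sup>+t. ennreal (c * ((x - x*t) powr (a-1) * (x*t) powr (b-1) * indicator {0<..<x} (x*t))) \<partial>lborel)"
      using x by (subst nn_integral_real_affine[where c=x and t=0]) auto
    also have "(\<lambda>t. ennreal (c * ((x - x*t) powr (a-1) * (x*t) powr (b-1) * indicator {0<..<x} (x*t))))
       = (\<lambda>t. ennreal (c * x powr (a + b - 2)) * ennreal (t powr (b-1) * (1-t) powr (a-1) * indicator {0<..<1} t))"
    proof
      fix t :: real
      show "ennreal (c * ((x - x*t) powr (a-1) * (x*t) powr (b-1) * indicator {0<..<x} (x*t)))
         = ennreal (c * x powr (a + b - 2)) * ennreal (t powr (b-1) * (1-t) powr (a-1) * indicator {0<..<1} t)"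
      proof (cases "0 < t \<and> t < 1")
        case True
        have i: "indicator {0<..<x} (x*t) = (1::real)" "indicator {0<..<1} t = (1::real)"
          using True x by (auto simp: indicator_def mult_less_cancel_left1)
        have "(x - x*t) powr (a-1) = x powr (a-1) * (1-t) powr (a-1)"
          using True x by (simp add: powr_mult[symmetric] algebra_simps)
        moreover have "(x*t) powr (b-1) = x powr (b-1) * t powr (b-1)"
          using True x by (simp add: powr_mult)
        moreover have "x powr (a-1) * x powr (b-1) = x powr (a + b - 2)"
          using x by (simp add: powr_add[symmetric])
        ultimately have "c * ((x - x*t) powr (a-1) * (x*t) powr (b-1) * indicator {0<..<x} (x*t))
           = (c * x powr (a + b - 2)) * (t powr (b-1) * (1-t) powr (a-1) * indicator {0<..<1} t)"
          unfolding i by (simp add: algebra_simps)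
        then show ?thesis using c True x by (simp add: ennreal_mult'[symmetric])
      next
        case False
        then have "indicator {0<..<x} (x*t) = (0::real)" "indicator {0<..<1} t = (0::real)"
          using x by (auto simp: indicator_def mult_less_cancel_left1 zero_less_mult_iff)
        then show ?thesis by simp
      qed
    qed
    also have "ennreal x * (\<integral>\<^sup>+t. ennreal (c * x powr (a + b - 2)) * ennreal (t powr (b-1) * (1-t) powr (a-1) * indicator {0<..<1} t) \<partial>lborel)
      = ennreal x * (ennreal (c * x powr (a + b - 2)) * ennreal (Beta b a))"
      by (subst nn_integral_cmult) (auto simp: beta_nn[OF b a])
    also have "\<dots> = ennreal (x * (c * x powr (a + b - 2) * Beta b a))"
      using x c by (simp add: ennreal_mult'[symmetric] mult.assoc)
    also have "x * (c * x powr (a + b - 2) * Beta b a) = gamma_density (a + b) theta x"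
    proof -
      have "x * x powr (a + b - 2) = x powr (a + b - 1)"
        proof -
        have "x powr (a + b - 1) = x powr 1 * x powr (a + b - 2)"
          by (subst powr_add[symmetric]) simp
        then show ?thesis using x by simp
      qed
      moreover have "theta powr a * theta powr b = theta powr (a + b)"
        using th by (simp add: powr_add)
      moreover have ga: "Gamma (a + b) > 0" "Gamma a > 0" "Gamma b > 0" using a b by simp_all
      moreover have g: "Gamma (a + b) \<noteq> 0" "Gamma a \<noteq> 0" "Gamma b \<noteq> 0"
        using ga by linarith+
      ultimately show ?thesis using x a b th
        by (simp add: gamma_density_def c_def Beta_def field_simps g)
    qed
    finally show ?thesis .
  qed
qed


lemma nn_cov:
  fixes f g g' :: "real \<Rightarrow> real"
  assumes S: "S \<in> sets lebesgue"
    and der: "\<And>x. x \<in> S \<Longrightarrow> (g has_field_derivative g' x) (at x within S)"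
    and inj: "inj_on g S"
    and f0: "\<And>y. 0 \<le> f y"
    and int: "(\<lambda>x. \<bar>g' x\<bar> * f (g x)) absolutely_integrable_on S"
  shows "(\<integral>\<^sup>+x. ennreal (\<bar>g' x\<bar> * f (g x)) * indicator S x \<partial>lborel)
       = (\<integral>\<^sup>+y. ennreal (f y) * indicator (g ` S) y \<partial>lborel)"
proof -
  define b where "b = integral S (\<lambda>x. \<bar>g' x\<bar> * f (g x))"
  have *: "f absolutely_integrable_on g ` S \<and> integral (g ` S) f = b"
    using has_absolute_integral_change_of_variables_1'[OF S der inj] int b_def by blast
  have "((\<lambda>x. \<bar>g' x\<bar> * f (g x)) has_integral b) S"
    unfolding b_def using set_lebesgue_integral_eq_integral(1)[OF int] by (rule integrable_integral)
  then have 1: "(\<integral>\<^sup>+x. ennreal (\<bar>g' x\<bar> * f (g x)) * indicator S x \<partial>lborel) = ennreal b"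
    by (rule nn_integral_has_integral_lebesgue'[rotated]) (simp add: f0)
  have "(f has_integral b) (g ` S)"
    using * set_lebesgue_integral_eq_integral(1) integrable_integral by metis
  then have 2: "(\<integral>\<^sup>+y. ennreal (f y) * indicator (g ` S) y \<partial>lborel) = ennreal b"
    by (rule nn_integral_has_integral_lebesgue'[rotated]) (simp add: f0)
  show ?thesis using 1 2 by simp
qed

lemma nd_sq_identity:
  assumes s: "s > 0" and x: "x \<noteq> 0"
  shows "\<bar>2 * x\<bar> * (gamma_density (1/2) (2 * s\<^sup>2) (x\<^sup>2) / 2) = normal_density 0 s x"
proof -
  have x2: "x\<^sup>2 > 0" using x by simp
  have "(x\<^sup>2) powr (1/2 - 1) = 1 / \<bar>x\<bar>"
    using x2 by (simp add: powr_minus_divide powr_half_sqrt)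
  moreover have "(2 * s\<^sup>2) powr (1/2) = sqrt 2 * s"
    using s by (simp add: powr_half_sqrt real_sqrt_mult)
  moreover have "sqrt (2 * pi * s\<^sup>2) = sqrt 2 * sqrt pi * s"
    using s by (simp add: real_sqrt_mult)
  ultimately show ?thesis using x2 x s
    by (simp add: gamma_density_def normal_density_def Gamma_one_half_real field_simps)
qed


lemma image_power2_pos: "(\<lambda>x::real. x\<^sup>2) ` {0<..} = {0<..}"
proof
  show "{0<..} \<subseteq> (\<lambda>x::real. x\<^sup>2) ` {0<..}"
  proof
    fix y :: real assume "y \<in> {0<..}"
    then have "y = (sqrt y)\<^sup>2" "sqrt y \<in> {0<..}" by auto
    then show "y \<in> (\<lambda>x. x\<^sup>2) ` {0<..}" by blast
  qed
qed auto

lemma image_power2_neg: "(\<lambda>x::real. x\<^sup>2) ` {..<0} = {0<..}"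
proof
  show "{0<..} \<subseteq> (\<lambda>x::real. x\<^sup>2) ` {..<0}"
  proof
    fix y :: real assume "y \<in> {0<..}"
    then have "y = (- sqrt y)\<^sup>2" "- sqrt y \<in> {..<0}" by auto
    then show "y \<in> (\<lambda>x. x\<^sup>2) ` {..<0}" by blast
  qed
qed auto

lemma sq_normal:
  assumes s: "s > 0"
  shows "distr (density lborel (normal_density 0 s)) lborel (\<lambda>x. x\<^sup>2) = density lborel (gamma_density (1/2) (2 * s\<^sup>2))"
proof (rule measure_eqI)
  show "sets (distr (density lborel (normal_density 0 s)) lborel (\<lambda>x. x\<^sup>2)) = sets (density lborel (gamma_density (1/2) (2 * s\<^sup>2)))"
    by simp
  fix A assume "A \<in> sets (distr (density lborel (normal_density 0 s)) lborel (\<lambda>x. x\<^sup>2))"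
  then have A[measurable]: "A \<in> sets borel" by simp
  define F where "F x = normal_density 0 s x * indicator A (x\<^sup>2)" for x :: real
  define f where "f y = gamma_density (1/2) (2 * s\<^sup>2) y * indicator A y / 2" for y :: real
  have Fm[measurable]: "F \<in> borel_measurable borel" unfolding F_def by measurable
  have fm[measurable]: "f \<in> borel_measurable borel" unfolding f_def by measurable
  have f0: "0 \<le> f y" for y using s by (simp add: f_def)
  have F0: "0 \<le> F x" for x by (simp add: F_def)
  have Fint: "integrable lborel F"
    by (rule Bochner_Integration.integrable_bound[OF integrable_normal_density]) (use s in \<open>auto simp: F_def indicator_def\<close>)
  have Feq: "\<bar>2 * x\<bar> * f (x\<^sup>2) = F x" if "x \<noteq> 0" for x
    using nd_sq_identity[OF s that] by (simp add: f_def F_def indicator_def)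
  have cov: "(\<integral>\<^sup>+x. ennreal (F x) * indicator S x \<partial>lborel) = (\<integral>\<^sup>+y. ennreal (f y) * indicator {0<..} y \<partial>lborel)"
    if S: "S = {0<..} \<or> S = {..<0}" for S
  proof -
    have S0: "0 \<notin> S" using S by auto
    have Sl: "S \<in> sets lebesgue" using S by auto
    have FeqS: "F x = \<bar>2 * x\<bar> * f (x\<^sup>2)" if "x \<in> S" for x
      using Feq[of x] S0 that by metis
    have img: "(\<lambda>x. x\<^sup>2) ` S = {0<..}" using S image_power2_pos image_power2_neg by auto
    have inj: "inj_on (\<lambda>x::real. x\<^sup>2) S"
      using S by (auto simp: inj_on_def power2_eq_iff)
    have der: "((\<lambda>x. x\<^sup>2) has_field_derivative 2 * x) (at x within S)" for x :: real
      by (auto intro!: derivative_eq_intros)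
    have "set_integrable lborel S F"
      unfolding set_integrable_def using S
      by (intro integrable_mult_indicator Fint) auto
    then have "F absolutely_integrable_on S"
      unfolding set_integrable_def by (subst integrable_completion) auto
    then have int: "(\<lambda>x. \<bar>2 * x\<bar> * f (x\<^sup>2)) absolutely_integrable_on S"
      by (rule set_integrable_cong[THEN iffD1, rotated -1]) (simp_all add: FeqS)
    have "(\<integral>\<^sup>+x. ennreal (F x) * indicator S x \<partial>lborel) = (\<integral>\<^sup>+x. ennreal (\<bar>2 * x\<bar> * f (x\<^sup>2)) * indicator S x \<partial>lborel)"
      by (intro nn_integral_cong) (simp add: FeqS indicator_def)
    also have "\<dots> = (\<integral>\<^sup>+y. ennreal (f y) * indicator ((\<lambda>x. x\<^sup>2) ` S) y \<partial>lborel)"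
      by (rule nn_cov[OF Sl der inj f0 int])
    finally show ?thesis unfolding img .
  qed
  have "emeasure (distr (density lborel (normal_density 0 s)) lborel (\<lambda>x. x\<^sup>2)) A
      = (\<integral>\<^sup>+x. ennreal (F x) \<partial>lborel)"
  proof -
    have "emeasure (distr (density lborel (normal_density 0 s)) lborel (\<lambda>x. x\<^sup>2)) A
       = emeasure (density lborel (normal_density 0 s)) ((\<lambda>x. x\<^sup>2) -` A \<inter> space (density lborel (normal_density 0 s)))"
      by (rule emeasure_distr) auto
    also have "\<dots> = (\<integral>\<^sup>+x. ennreal (normal_density 0 s x) * indicator ((\<lambda>x. x\<^sup>2) -` A) x \<partial>lborel)"
      using measurable_sets_borel[of "\<lambda>x::real. x\<^sup>2" borel A] A by (subst emeasure_density) auto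
    also have "\<dots> = (\<integral>\<^sup>+x. ennreal (F x) \<partial>lborel)"
      by (intro nn_integral_cong) (simp add: F_def indicator_def)
    finally show ?thesis .
  qed
  also have "\<dots> = (\<integral>\<^sup>+x. ennreal (F x) * indicator {0<..} x + ennreal (F x) * indicator {..<0} x \<partial>lborel)"
  proof (rule nn_integral_cong_AE)
    have "AE x in lborel. x \<noteq> 0" by (rule AE_lborel_singleton)
    then show "AE x in lborel. ennreal (F x) = ennreal (F x) * indicator {0<..} x + ennreal (F x) * indicator {..<0} x"
      by eventually_elim (auto simp: indicator_def)
  qed
  also have "\<dots> = (\<integral>\<^sup>+x. ennreal (F x) * indicator {0<..} x \<partial>lborel) + (\<integral>\<^sup>+x. ennreal (F x) * indicator {..<0} x \<partial>lborel)"
    by (rule nn_integral_add) auto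
  also have "\<dots> = (\<integral>\<^sup>+y. ennreal (f y) * indicator {0<..} y \<partial>lborel) + (\<integral>\<^sup>+y. ennreal (f y) * indicator {0<..} y \<partial>lborel)"
    using cov by simp
  also have "\<dots> = (\<integral>\<^sup>+y. ennreal (f y) * indicator {0<..} y + ennreal (f y) * indicator {0<..} y \<partial>lborel)"
    by (rule nn_integral_add[symmetric]) auto
  also have "\<dots> = (\<integral>\<^sup>+y. ennreal (gamma_density (1/2) (2 * s\<^sup>2) y) * indicator A y \<partial>lborel)"
  proof (rule nn_integral_cong)
    fix y :: real
    show "ennreal (f y) * indicator {0<..} y + ennreal (f y) * indicator {0<..} y = ennreal (gamma_density (1/2) (2 * s\<^sup>2) y) * indicator A y"
      using s by (cases "y > 0") (auto simp: f_def gamma_density_def indicator_def ennreal_plus[symmetric] simp del: ennreal_plus)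
  qed
  also have "\<dots> = emeasure (density lborel (gamma_density (1/2) (2 * s\<^sup>2))) A"
    by (simp add: emeasure_density)
  finally show "emeasure (distr (density lborel (normal_density 0 s)) lborel (\<lambda>x. x\<^sup>2)) A = emeasure (density lborel (gamma_density (1/2) (2 * s\<^sup>2))) A" .
qed


lemma (in prob_space) gamma_distributed_sum:
  assumes "finite I" "I \<noteq> {}" "theta > 0"
    and "\<And>i. i \<in> I \<Longrightarrow> K i > 0"
    and "\<And>i. i \<in> I \<Longrightarrow> distributed M lborel (X i) (gamma_density (K i) theta)"
    and "indep_vars (\<lambda>i. borel) X I"
  shows "distributed M lborel (\<lambda>x. \<Sum>i\<in>I. X i x) (gamma_density (\<Sum>i\<in>I. K i) theta)"
  using assms
proof (induct I rule: finite_ne_induct)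
  case (singleton i) then show ?case by auto
next
  case (insert i I)
  have ind: "indep_var borel (X i) borel (\<lambda>x. \<Sum>i\<in>I. X i x)"
    using insert by (intro indep_vars_sum) auto
  have IH: "distributed M lborel (\<lambda>x. \<Sum>i\<in>I. X i x) (gamma_density (\<Sum>i\<in>I. K i) theta)"
    using insert by (intro insert.hyps(4)) (auto intro: indep_vars_subset)
  have pos: "(\<Sum>i\<in>I. K i) > 0" using insert by (intro sum_pos) auto
  have "distributed M lborel (\<lambda>x. X i x + (\<Sum>i\<in>I. X i x))
     (\<lambda>x. \<integral>\<^sup>+y. ennreal (gamma_density (K i) theta (x - y)) * ennreal (gamma_density (\<Sum>i\<in>I. K i) theta y) \<partial>lborel)"
    by (rule distributed_convolution[OF ind insert.prems(3)[of i] IH]) simp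
  also have "(\<lambda>x. \<integral>\<^sup>+y. ennreal (gamma_density (K i) theta (x - y)) * ennreal (gamma_density (\<Sum>i\<in>I. K i) theta y) \<partial>lborel)
     = (\<lambda>x. ennreal (gamma_density (K i + (\<Sum>i\<in>I. K i)) theta x))"
    by (rule conv_gamma_density) (use insert pos in auto)
  finally show ?case using insert by simp
qed


lemma (in prob_space) distributed_sq:
  assumes s: "s > 0" and X: "distributed M lborel X (normal_density 0 s)"
  shows "distributed M lborel (\<lambda>x. (X x)\<^sup>2) (gamma_density (1/2) (2 * s\<^sup>2))"
  unfolding distributed_def
proof (intro conjI)
  have Xm: "X \<in> measurable M lborel" using X by (simp add: distributed_def)
  have "distr M lborel (\<lambda>x. (X x)\<^sup>2) = distr (distr M lborel X) lborel (\<lambda>x. x\<^sup>2)"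
    by (subst distr_distr) (use Xm in \<open>auto simp: comp_def\<close>)
  also have "distr M lborel X = density lborel (normal_density 0 s)"
    using X by (simp add: distributed_def)
  also have "distr (density lborel (normal_density 0 s)) lborel (\<lambda>x. x\<^sup>2) = density lborel (gamma_density (1/2) (2 * s\<^sup>2))"
    by (rule sq_normal[OF s])
  finally show "distr M lborel (\<lambda>x. (X x)\<^sup>2) = density lborel (\<lambda>x. ennreal (gamma_density (1/2) (2 * s\<^sup>2) x))" .
  show "(\<lambda>x. ennreal (gamma_density (1/2) (2 * s\<^sup>2) x)) \<in> borel_measurable lborel" by measurable
  have [measurable]: "X \<in> borel_measurable M" using Xm by simp
  show "(\<lambda>x. (X x)\<^sup>2) \<in> measurable M lborel" by simp
qed

lemma gm_prob: "prob_space (gauss_matrix :: ('d::finite \<times> 'k::finite \<Rightarrow> real) measure)"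
  unfolding gauss_matrix_def by (auto intro!: prob_space_PiM prob_space_normal_density)

lemma gm_space: "space (gauss_matrix :: ('d::finite \<times> 'k::finite \<Rightarrow> real) measure) = UNIV"
  unfolding gauss_matrix_def by (simp add: space_PiM)

lemma gm_comp:
  "distributed (gauss_matrix :: ('d::finite \<times> 'k::finite \<Rightarrow> real) measure) lborel (\<lambda>P. P p)
      (normal_density 0 (sqrt (1 / real CARD('k))))"
  unfolding distributed_def
proof (intro conjI)
  let ?N = "\<lambda>_::('d \<times> 'k). density lborel (normal_density 0 (sqrt (1 / real CARD('k))))"
  have "distr (gauss_matrix :: ('d \<times> 'k \<Rightarrow> real) measure) lborel (\<lambda>P. P p) = distr (PiM UNIV ?N) (?N p) (\<lambda>P. P p)"
    unfolding gauss_matrix_def by (rule distr_cong) auto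
  also have "\<dots> = ?N p"
    by (rule distr_PiM_component) (auto intro: prob_space_normal_density)
  finally show "distr (gauss_matrix :: ('d \<times> 'k \<Rightarrow> real) measure) lborel (\<lambda>P. P p) = density lborel (\<lambda>x. ennreal (normal_density 0 (sqrt (1 / real CARD('k))) x))" .
  show "(\<lambda>x. ennreal (normal_density 0 (sqrt (1 / real CARD('k))) x)) \<in> borel_measurable lborel" by measurable
  show "(\<lambda>P. P p) \<in> measurable (gauss_matrix :: ('d \<times> 'k \<Rightarrow> real) measure) lborel"
  proof -
    have "(\<lambda>P. P p) \<in> measurable (PiM UNIV ?N) (?N p)" by (rule measurable_component_singleton) simp
    moreover have "measurable (PiM UNIV ?N) (?N p) = measurable (PiM UNIV ?N) lborel" by (rule measurable_cong_sets) auto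
    ultimately show ?thesis unfolding gauss_matrix_def by simp
  qed
qed

lemma gm_indep:
  "prob_space.indep_vars (gauss_matrix :: ('d::finite \<times> 'k::finite \<Rightarrow> real) measure) (\<lambda>_. borel) (\<lambda>p P. P p) UNIV"
proof -
  let ?M = "gauss_matrix :: ('d \<times> 'k \<Rightarrow> real) measure"
  let ?N = "\<lambda>_::('d \<times> 'k). density lborel (normal_density 0 (sqrt (1 / real CARD('k))))"
  interpret prob_space ?M by (rule gm_prob)
  have rv: "random_variable borel (\<lambda>P. P p)" for p
    using gm_comp[of p] unfolding distributed_def by simp
  have id: "(\<lambda>x::('d\<times>'k\<Rightarrow>real). \<lambda>i\<in>UNIV. x i) = (\<lambda>x. x)" by (auto simp: restrict_def)
  have se: "sets (PiM UNIV (\<lambda>_::('d\<times>'k). borel)) = sets ?M"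
    unfolding gauss_matrix_def by (rule sets_PiM_cong) auto
  have 1: "distr ?M (PiM UNIV (\<lambda>_. borel)) (\<lambda>x. \<lambda>i\<in>UNIV. x i) = ?M"
    unfolding id by (rule distr_id2[OF se])
  have 2: "distr ?M borel (\<lambda>x. x p) = ?N p" for p
  proof -
    have "distr ?M borel (\<lambda>x. x p) = distr ?M lborel (\<lambda>x. x p)" by (rule distr_cong) auto
    also have "\<dots> = ?N p" using gm_comp[of p] unfolding distributed_def by blast
    finally show ?thesis .
  qed
  have 3: "(PiM UNIV (\<lambda>i. distr ?M borel (\<lambda>x. x i))) = ?M"
  proof -
    have "(PiM UNIV (\<lambda>i. distr ?M borel (\<lambda>x. x i))) = PiM UNIV ?N"
      by (rule PiM_cong) (auto simp: 2)
    then show ?thesis unfolding gauss_matrix_def .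
  qed
  show ?thesis
    by (rule iffD2[OF indep_vars_iff_distr_eq_PiM]) (use 1 3 rv in auto)
qed


lemma gm_col:
  fixes w :: "real^'d::finite" and j :: "'k::finite"
  assumes w: "w \<noteq> 0"
  shows "distributed (gauss_matrix :: ('d \<times> 'k \<Rightarrow> real) measure) lborel (\<lambda>P. \<Sum>i\<in>UNIV. P (i, j) * w $ i)
           (normal_density 0 (sqrt (1 / real CARD('k)) * norm w))"
proof -
  let ?M = "gauss_matrix :: ('d \<times> 'k \<Rightarrow> real) measure"
  define s0 where "s0 = sqrt (1 / real CARD('k))"
  have s0: "s0 > 0" by (simp add: s0_def)
  interpret prob_space ?M by (rule gm_prob)
  define J where "J = {i. w $ i \<noteq> 0}"
  have "J \<noteq> {}" using w by (auto simp: J_def vec_eq_iff)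
  define X where "X p = (\<lambda>P::('d \<times> 'k \<Rightarrow> real). w $ fst p * P p)" for p
  have e: "J \<times> {j} = (\<lambda>i. (i, j)) ` J" by auto
  have sJ: "(\<Sum>p\<in>J \<times> {j}. g p) = (\<Sum>i\<in>J. g (i, j))" for g :: "'d \<times> 'k \<Rightarrow> real"
    unfolding e by (subst sum.reindex) (auto simp: inj_on_def)
  have ind: "indep_vars (\<lambda>_. borel) X (J \<times> {j})"
    unfolding X_def
    by (rule indep_vars_compose2[where X="\<lambda>p P. P p"], rule indep_vars_subset[OF gm_indep]) auto
  have dist: "distributed ?M lborel (X p) (normal_density 0 (\<bar>w $ fst p\<bar> * s0))" if "p \<in> J \<times> {j}" for p
  proof -
    have "w $ fst p \<noteq> 0" using that by (auto simp: J_def)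
    from normal_density_affine[OF gm_comp[of p] _ this, of 0]
    show ?thesis by (simp add: X_def s0_def)
  qed
  have "distributed ?M lborel (\<lambda>x. \<Sum>p\<in>J \<times> {j}. X p x)
      (normal_density (\<Sum>p\<in>J \<times> {j}. 0) (sqrt (\<Sum>p\<in>J \<times> {j}. (\<bar>w $ fst p\<bar> * s0)\<^sup>2)))"
    by (rule sum_indep_normal) (use \<open>J \<noteq> {}\<close> ind dist s0 in \<open>auto simp: J_def\<close>)
  moreover have "(\<lambda>x. \<Sum>p\<in>J \<times> {j}. X p x) = (\<lambda>P. \<Sum>i\<in>UNIV. P (i, j) * w $ i)"
  proof
    fix P :: "'d \<times> 'k \<Rightarrow> real"
    have "(\<Sum>p\<in>J \<times> {j}. X p P) = (\<Sum>i\<in>J. P (i, j) * w $ i)"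
      by (simp add: sJ X_def mult.commute)
    also have "\<dots> = (\<Sum>i\<in>UNIV. P (i, j) * w $ i)"
      by (rule sum.mono_neutral_left) (auto simp: J_def)
    finally show "(\<Sum>p\<in>J \<times> {j}. X p P) = (\<Sum>i\<in>UNIV. P (i, j) * w $ i)" .
  qed
  moreover have "sqrt (\<Sum>p\<in>J \<times> {j}. (\<bar>w $ fst p\<bar> * s0)\<^sup>2) = s0 * norm w"
  proof -
    have "(\<Sum>p\<in>J \<times> {j}. (\<bar>w $ fst p\<bar> * s0)\<^sup>2) = s0\<^sup>2 * (\<Sum>i\<in>J. (w $ i)\<^sup>2)"
      by (simp add: sJ power_mult_distrib sum_distrib_left mult.commute)
    also have "(\<Sum>i\<in>J. (w $ i)\<^sup>2) = (\<Sum>i\<in>UNIV. (w $ i)\<^sup>2)"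
      by (rule sum.mono_neutral_left) (auto simp: J_def)
    finally show ?thesis using s0 by (simp add: norm_vec_def L2_set_def real_sqrt_mult)
  qed
  ultimately show ?thesis by (simp add: s0_def)
qed

lemma gm_colsq_indep:
  fixes w :: "real^'d::finite"
  shows "prob_space.indep_vars (gauss_matrix :: ('d \<times> 'k::finite \<Rightarrow> real) measure) (\<lambda>_. borel)
           (\<lambda>j P. (\<Sum>i\<in>UNIV. P (i, j) * w $ i)\<^sup>2) UNIV"
proof -
  let ?M = "gauss_matrix :: ('d \<times> 'k \<Rightarrow> real) measure"
  interpret prob_space ?M by (rule gm_prob)
  have r: "indep_vars (\<lambda>j. PiM (UNIV \<times> {j}) (\<lambda>_. borel)) (\<lambda>j P. restrict (\<lambda>p. P p) (UNIV \<times> {j})) (UNIV :: 'k set)"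
    by (rule indep_vars_restrict[OF gm_indep]) (auto simp: disjoint_family_on_def)
  have m: "(\<lambda>f. (\<Sum>i\<in>UNIV. f (i, j) * w $ i)\<^sup>2) \<in> borel_measurable (PiM (UNIV \<times> {j}) (\<lambda>_::('d \<times> 'k). (borel :: real measure)))" for j :: 'k
  proof -
    have [measurable]: "(\<lambda>f. f (i, j)) \<in> borel_measurable (PiM (UNIV \<times> {j}) (\<lambda>_::('d \<times> 'k). (borel :: real measure)))" for i
      by (rule measurable_component_singleton) auto
    show ?thesis by measurable
  qed
  have "indep_vars (\<lambda>_. borel) (\<lambda>j P. (\<lambda>f. (\<Sum>i\<in>UNIV. f (i, j) * w $ i)\<^sup>2) (restrict (\<lambda>p. P p) (UNIV \<times> {j}))) UNIV"
    by (rule indep_vars_compose2[OF r m])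
  then show ?thesis by simp
qed

lemma gm_chi:
  fixes w :: "real^'d::finite"
  assumes w: "w \<noteq> 0"
  shows "distributed (gauss_matrix :: ('d \<times> 'k::finite \<Rightarrow> real) measure) lborel
     (\<lambda>P. \<Sum>j\<in>UNIV. (\<Sum>i\<in>UNIV. P (i, j) * w $ i)\<^sup>2)
     (gamma_density (real CARD('k) / 2) (2 * (norm w)\<^sup>2 / real CARD('k)))"
proof -
  let ?M = "gauss_matrix :: ('d \<times> 'k \<Rightarrow> real) measure"
  interpret prob_space ?M by (rule gm_prob)
  define s where "s = sqrt (1 / real CARD('k)) * norm w"
  have s: "s > 0" using w by (simp add: s_def)
  have "distributed ?M lborel (\<lambda>P. \<Sum>j\<in>UNIV. (\<Sum>i\<in>UNIV. P (i, j) * w $ i)\<^sup>2) (gamma_density (\<Sum>j\<in>(UNIV::'k set). 1/2) (2 * s\<^sup>2))"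
  proof (rule gamma_distributed_sum)
    fix j :: 'k
    have col: "distributed ?M lborel (\<lambda>P. \<Sum>i\<in>UNIV. P (i, j) * w $ i) (normal_density 0 s)"
      using gm_col[OF w, of j] by (simp add: s_def)
    show "distributed ?M lborel (\<lambda>P. (\<Sum>i\<in>UNIV. P (i, j) * w $ i)\<^sup>2) (gamma_density (1/2) (2 * s\<^sup>2))"
      by (rule distributed_sq[OF s col])
  qed (use s gm_colsq_indep in auto)
  moreover have "(\<Sum>j\<in>(UNIV::'k set). 1/2) = real CARD('k) / 2" by simp
  moreover have "2 * s\<^sup>2 = 2 * (norm w)\<^sup>2 / real CARD('k)"
    by (simp add: s_def power_mult_distrib real_sqrt_pow2)
  ultimately show ?thesis by simp
qed


lemma gm_comp_meas[measurable]:
  "(\<lambda>P. P p) \<in> borel_measurable (gauss_matrix :: ('d::finite \<times> 'k::finite \<Rightarrow> real) measure)"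
  using gm_comp[of p] unfolding distributed_def by simp

lemma norm_chi: "norm ((\<chi> j. f j) :: real^'k::finite) = sqrt (\<Sum>j\<in>UNIV. (f j)\<^sup>2)"
  by (simp add: norm_vec_def L2_set_def)

lemma gm_prob_bound:
  fixes v :: "real^'d::finite"
  assumes C: "C > 0" and Ct: "Ct > 0" and d: "delta' > 0" and v: "norm v \<le> C"
    and g: "measure (gamma_measure (real CARD('k) / 2) (2 * C\<^sup>2 / real CARD('k))) {..Ct\<^sup>2} \<ge> 1 - delta'"
  shows "measure (gauss_matrix :: ('d \<times> 'k::finite \<Rightarrow> real) measure)
           {P. norm ((\<chi> j. \<Sum>i\<in>UNIV. P (i, j) * v $ i) :: real^'k) \<le> Ct} \<ge> 1 - delta'"
proof -
  let ?M = "gauss_matrix :: ('d \<times> 'k \<Rightarrow> real) measure"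
  interpret prob_space ?M by (rule gm_prob)
  define Sv where "Sv P = (\<Sum>j\<in>UNIV. (\<Sum>i\<in>UNIV. P (i, j) * v $ i)\<^sup>2)" for P :: "'d \<times> 'k \<Rightarrow> real"
  have eqset: "{P. norm ((\<chi> j. \<Sum>i\<in>UNIV. P (i, j) * v $ i) :: real^'k) \<le> Ct} = {P. Sv P \<le> Ct\<^sup>2}"
  proof -
    have "norm ((\<chi> j. \<Sum>i\<in>UNIV. P (i, j) * v $ i) :: real^'k) \<le> Ct \<longleftrightarrow> Sv P \<le> Ct\<^sup>2" for P
    proof -
      have "Sv P \<ge> 0" by (simp add: Sv_def sum_nonneg)
      then show ?thesis unfolding norm_chi Sv_def[symmetric] using Ct
        by (metis abs_of_pos real_sqrt_abs real_sqrt_le_iff)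
    qed
    then show ?thesis by auto
  qed
  have Sv_m[measurable]: "Sv \<in> borel_measurable ?M" unfolding Sv_def by measurable
  have sets: "{P. Sv P \<le> Ct\<^sup>2} \<in> sets ?M"
  proof -
    have "{P. Sv P \<le> Ct\<^sup>2} = Sv -` {..Ct\<^sup>2} \<inter> space ?M" by (auto simp: gm_space)
    then show ?thesis using Sv_m by auto
  qed
  show ?thesis
  proof (cases "v = 0")
    case True
    then have "{P. Sv P \<le> Ct\<^sup>2} = space ?M" by (auto simp: Sv_def gm_space)
    then show ?thesis unfolding eqset using d by (simp add: prob_space)
  next
    case False
    then have nv: "norm v > 0" by simp
    define w where "w = (C / norm v) *\<^sub>R v"
    have w0: "w \<noteq> 0" using False C by (simp add: w_def)
    have nw: "norm w = C" using nv C by (simp add: w_def)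
    define Sw where "Sw P = (\<Sum>j\<in>UNIV. (\<Sum>i\<in>UNIV. P (i, j) * w $ i)\<^sup>2)" for P :: "'d \<times> 'k \<Rightarrow> real"
    have Sw_Sv: "Sw P = (C / norm v)\<^sup>2 * Sv P" for P
      by (simp add: Sw_def Sv_def w_def sum_distrib_left power_mult_distrib[symmetric] algebra_simps)
    have fac: "(C / norm v)\<^sup>2 \<ge> 1" using nv C v by (simp add: le_divide_eq)
    have sub: "{P. Sw P \<le> Ct\<^sup>2} \<subseteq> {P. Sv P \<le> Ct\<^sup>2}"
    proof
      fix P assume "P \<in> {P. Sw P \<le> Ct\<^sup>2}"
      moreover have "Sv P \<ge> 0" by (simp add: Sv_def sum_nonneg)
      ultimately show "P \<in> {P. Sv P \<le> Ct\<^sup>2}" using fac unfolding Sw_Sv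
        by simp (metis dual_order.trans mult_le_cancel_right1 not_le order.strict_iff_not)
    qed
    have dist: "distributed ?M lborel Sw (gamma_density (real CARD('k) / 2) (2 * C\<^sup>2 / real CARD('k)))"
      using gm_chi[OF w0, where 'k='k] unfolding Sw_def[symmetric] nw .
    have Sw_m: "Sw \<in> measurable ?M lborel" using dist unfolding distributed_def by simp
    have "measure ?M {P. Sw P \<le> Ct\<^sup>2} = measure (distr ?M lborel Sw) {..Ct\<^sup>2}"
      using Sw_m by (subst measure_distr) (auto simp: gm_space vimage_def)
    also have "distr ?M lborel Sw = gamma_measure (real CARD('k) / 2) (2 * C\<^sup>2 / real CARD('k))"
      using dist unfolding distributed_def gamma_measure_def by simp
    finally have "measure ?M {P. Sw P \<le> Ct\<^sup>2} \<ge> 1 - delta'" using g by simp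
    also have "measure ?M {P. Sw P \<le> Ct\<^sup>2} \<le> measure ?M {P. Sv P \<le> Ct\<^sup>2}"
      by (rule finite_measure_mono[OF sub sets])
    finally show ?thesis unfolding eqset .
  qed
qed


lemma measurable_chi:
  assumes "\<And>j. (\<lambda>x. f x j) \<in> borel_measurable M"
  shows "(\<lambda>x. (\<chi> j. f x j) :: real^'k::finite) \<in> borel_measurable M"
proof (subst borel_measurable_euclidean_space, intro ballI)
  fix b :: "real^'k" assume "b \<in> Basis"
  then obtain j where b: "b = axis j 1" by (auto simp: Basis_vec_def)
  have "(\<lambda>x. (\<chi> j. f x j) \<bullet> b) = (\<lambda>x. f x j)"
    unfolding b by (simp add: cart_eq_inner_axis[symmetric])
  then show "(\<lambda>x. (\<chi> j. f x j) \<bullet> b) \<in> borel_measurable M" using assms by simp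
qed

lemma comp_meas_density:
  "(\<lambda>w. w j) \<in> borel_measurable (PiM UNIV (\<lambda>_::'a. density lborel f))"
proof -
  have "(\<lambda>w. w j) \<in> measurable (PiM UNIV (\<lambda>_::'a. density lborel f)) (density lborel f)"
    by (rule measurable_component_singleton) simp
  moreover have "measurable (PiM UNIV (\<lambda>_::'a. density lborel f)) (density lborel f) = measurable (PiM UNIV (\<lambda>_::'a. density lborel f)) borel"
    by (rule measurable_cong_sets) auto
  ultimately show ?thesis by simp
qed

lemma vec_lambda_meas:
  "(\<lambda>w. vec_lambda w :: real^'k::finite) \<in> borel_measurable (PiM UNIV (\<lambda>_::'k. density lborel f))"
  using measurable_chi[where f="\<lambda>w j. w j" and M="PiM UNIV (\<lambda>_::'k. density lborel f)", OF comp_meas_density] by simp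

definition Lm :: "('d::finite \<times> 'k::finite \<Rightarrow> real) \<Rightarrow> real^'d \<Rightarrow> real^'k" where
  "Lm P v = (\<chi> j. \<Sum>i\<in>UNIV. P (i, j) * v $ i)"

lemma Lm_add: "Lm P (a + b) = Lm P a + Lm P b"
  by (simp add: Lm_def vec_eq_iff sum.distrib distrib_left)

lemma Lm_diff: "Lm P (a - b) = Lm P a - Lm P b"
  by (simp add: Lm_def vec_eq_iff sum_subtractf right_diff_distrib)

lemma Lm_zero: "Lm P 0 = 0"
  by (simp add: Lm_def vec_eq_iff)

lemma proj_sum_eq: "proj_sum P z D = Lm P (\<Sum>x\<leftarrow>D. z x)"
  by (induction D) (simp_all add: proj_sum_def Lm_zero Lm_add, simp add: Lm_def)

lemma Lm_meas[measurable]: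
  "(\<lambda>P. Lm P s) \<in> borel_measurable (gauss_matrix :: ('d::finite \<times> 'k::finite \<Rightarrow> real) measure)"
  unfolding Lm_def by (rule measurable_chi) measurable

lemma gauss_mech_prob: assumes sg: "sg > 0" shows "prob_space (gauss_mech sg (y :: real^'k::finite))"
proof -
  have [measurable]: "(\<lambda>w. vec_lambda w :: real^'k) \<in> borel_measurable (PiM UNIV (\<lambda>_::'k. density lborel (\<lambda>x. ennreal (normal_density 0 sg x))))"
    by (rule vec_lambda_meas)
  have W: "prob_space (PiM UNIV (\<lambda>_::'k. density lborel (\<lambda>x. ennreal (normal_density 0 sg x))))"
    by (rule prob_space_PiM) (rule prob_space_normal_density, rule sg)
  have a: "(\<lambda>v::real^'k. y + v) \<in> borel_measurable borel" by measurable
  have "(\<lambda>w. y + vec_lambda w :: real^'k) \<in> borel_measurable (PiM UNIV (\<lambda>_::'k. density lborel (\<lambda>x. ennreal (normal_density 0 sg x))))"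
    using measurable_compose[OF vec_lambda_meas a] by (simp add: o_def)
  then show ?thesis unfolding gauss_mech_def
    by (intro prob_space.prob_space_distr[OF W]) simp
qed

lemma gauss_mech_sets[simp]: "sets (gauss_mech sg y) = sets borel"
  by (simp add: gauss_mech_def)

lemma gauss_mech_meas:
  assumes sg: "sg > 0"
  shows "(gauss_mech sg :: real^'k::finite \<Rightarrow> _) \<in> measurable borel (subprob_algebra borel)"
proof -
  let ?W = "PiM UNIV (\<lambda>_::'k. density lborel (normal_density 0 sg))"
  have "(\<lambda>y. distr ?W borel (\<lambda>w. y + (\<chi> j. w j))) \<in> measurable (borel :: (real^'k) measure) (subprob_algebra borel)"
  proof (rule measurable_distr2[where M="?W"])
    have [measurable]: "(\<lambda>w. (\<chi> j. w j) :: real^'k) \<in> borel_measurable ?W"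
      by (rule vec_lambda_meas)
    show "(\<lambda>(y, w). y + (\<chi> j. w j)) \<in> measurable (borel \<Otimes>\<^sub>M ?W) (borel :: (real^'k) measure)"
      by measurable
    show "(\<lambda>x. ?W) \<in> measurable borel (subprob_algebra ?W)"
    proof (rule measurable_const)
      have "prob_space ?W" by (rule prob_space_PiM) (rule prob_space_normal_density, rule sg)
      then show "?W \<in> space (subprob_algebra ?W)"
        by (auto simp: space_subprob_algebra intro!: prob_space_imp_subprob_space)
    qed
  qed
  then show ?thesis unfolding gauss_mech_def[abs_def] .
qed


lemma prob_emeasure_eq: assumes "prob_space M" shows "emeasure M A = ennreal (measure M A)"
proof -
  interpret prob_space M by fact
  show ?thesis by (rule emeasure_eq_measure)
qed

lemma coupling:
  fixes sD sD' :: "real^'d::finite"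
  assumes sg: "sg > 0" and d0: "0 \<le> delta" and d1: "0 < delta'"
    and dps: "dp_sens (gauss_mech sg :: real^'k::finite \<Rightarrow> (real^'k) measure) eps delta Ct"
    and bound: "measure (gauss_matrix :: ('d \<times> 'k \<Rightarrow> real) measure) {P. norm (Lm P (sD - sD') :: real^'k) \<le> Ct} \<ge> 1 - delta'"
    and E: "E \<in> sets borel"
  shows "measure ((gauss_matrix :: ('d \<times> 'k \<Rightarrow> real) measure) \<bind> (\<lambda>P. gauss_mech sg (Lm P sD :: real^'k))) E
     \<le> exp eps * measure ((gauss_matrix :: ('d \<times> 'k \<Rightarrow> real) measure) \<bind> (\<lambda>P. gauss_mech sg (Lm P sD' :: real^'k))) E + (delta + delta')"
proof -
  let ?M = "gauss_matrix :: ('d \<times> 'k \<Rightarrow> real) measure"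
  define N where "N P = gauss_mech sg (Lm P sD :: real^'k)" for P
  define N' where "N' P = gauss_mech sg (Lm P sD' :: real^'k)" for P
  define G where "G = {P. norm (Lm P (sD - sD') :: real^'k) \<le> Ct}"
  interpret M: prob_space ?M by (rule gm_prob)
  have spM: "space ?M \<noteq> {}" by (simp add: gm_space)
  have Nm: "N \<in> measurable ?M (subprob_algebra borel)"
    unfolding N_def by (rule measurable_compose[OF Lm_meas gauss_mech_meas[OF sg]])
  have N'm: "N' \<in> measurable ?M (subprob_algebra borel)"
    unfolding N'_def by (rule measurable_compose[OF Lm_meas gauss_mech_meas[OF sg]])
  have Gs: "G \<in> sets ?M"
  proof -
    have [measurable]: "(\<lambda>P. Lm P (sD - sD') :: real^'k) \<in> borel_measurable ?M" by (rule Lm_meas)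
    have "G = (\<lambda>P. norm (Lm P (sD - sD') :: real^'k)) -` {..Ct} \<inter> space ?M" by (auto simp: G_def gm_space)
    also have "\<dots> \<in> sets ?M" by measurable
    finally show ?thesis .
  qed
  have pN: "prob_space (N P)" "prob_space (N' P)" for P
    unfolding N_def N'_def by (rule gauss_mech_prob[OF sg])+
  have EN: "E \<in> sets (N P)" "E \<in> sets (N' P)" for P using E by (simp_all add: N_def N'_def)
  have pt: "emeasure (N P) E \<le> ennreal (exp eps) * emeasure (N' P) E + ennreal delta + indicator (space ?M - G) P" for P
  proof (cases "P \<in> G")
    case True
    then have "norm (Lm P sD - Lm P sD') \<le> Ct" by (simp add: G_def Lm_diff)
    then have "measure (N P) E \<le> exp eps * measure (N' P) E + delta"
      using dps EN unfolding dp_sens_def N_def N'_def by blast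
    then have "ennreal (measure (N P) E) \<le> ennreal (exp eps * measure (N' P) E + delta)"
      by (rule ennreal_leI)
    also have "\<dots> = ennreal (exp eps) * ennreal (measure (N' P) E) + ennreal delta"
      using d0 by (simp add: ennreal_plus ennreal_mult)
    finally show ?thesis
      using True prob_emeasure_eq[OF pN(1)] prob_emeasure_eq[OF pN(2)]
      by (simp add: add_increasing2)
  next
    case False
    have "emeasure (N P) E \<le> 1" by (rule prob_space.emeasure_le_1[OF pN(1)])
    also have "1 \<le> ennreal (exp eps) * emeasure (N' P) E + ennreal delta + indicator (space ?M - G) P"
      using False by (simp add: gm_space indicator_def)
    finally show ?thesis .
  qed
  have "emeasure (?M \<bind> N) E = (\<integral>\<^sup>+P. emeasure (N P) E \<partial>?M)"
    using E by (intro emeasure_bind[OF spM Nm]) auto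
  also have "\<dots> \<le> (\<integral>\<^sup>+P. ennreal (exp eps) * emeasure (N' P) E + ennreal delta + indicator (space ?M - G) P \<partial>?M)"
    by (rule nn_integral_mono) (rule pt)
  also have "\<dots> = ennreal (exp eps) * (\<integral>\<^sup>+P. emeasure (N' P) E \<partial>?M) + ennreal delta + emeasure ?M (space ?M - G)"
  proof -
    have m1[measurable]: "(\<lambda>P. emeasure (N' P) E) \<in> borel_measurable ?M"
      using measurable_emeasure_subprob_algebra[OF E] N'm by (rule measurable_compose[rotated])
    have m2: "space ?M - G \<in> sets ?M" using Gs by auto
    show ?thesis
      using m2 M.emeasure_space_1
      by (simp add: nn_integral_add nn_integral_cmult)
  qed
  also have "(\<integral>\<^sup>+P. emeasure (N' P) E \<partial>?M) = emeasure (?M \<bind> N') E"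
    using E by (intro emeasure_bind[OF spM N'm, symmetric]) auto
  also have "emeasure ?M (space ?M - G) = ennreal (1 - measure ?M G)"
    using Gs by (simp add: M.emeasure_eq_measure M.prob_compl)
  also have "ennreal (1 - measure ?M G) \<le> ennreal delta'"
    using bound by (intro ennreal_leI) (simp add: G_def)
  finally have main: "emeasure (?M \<bind> N) E \<le> ennreal (exp eps) * emeasure (?M \<bind> N') E + ennreal delta + ennreal delta'"
    by (simp add: add_left_mono)
  have pB: "prob_space (?M \<bind> N)" "prob_space (?M \<bind> N')"
    by (rule M.prob_space_bind[OF _ Nm], simp add: pN) (rule M.prob_space_bind[OF _ N'm], simp add: pN)
  have "ennreal (measure (?M \<bind> N) E) \<le> ennreal (exp eps * measure (?M \<bind> N') E + (delta + delta'))"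
    using main unfolding prob_emeasure_eq[OF pB(1)] prob_emeasure_eq[OF pB(2)]
    using d0 d1 by (simp add: ennreal_plus[symmetric] ennreal_mult[symmetric] add.assoc del: ennreal_plus)
  then have "measure (?M \<bind> N) E \<le> exp eps * measure (?M \<bind> N') E + (delta + delta')"
    by (rule ennreal_le_iff[THEN iffD1, rotated]) (use d0 d1 in \<open>auto intro!: add_nonneg_nonneg\<close>)
  then show ?thesis unfolding N_def N'_def .
qed


lemma proj_alg_eq:
  "proj_alg z sg D = (gauss_matrix :: ('d::finite \<times> 'k::finite \<Rightarrow> real) measure) \<bind> (\<lambda>P. gauss_mech sg (Lm P (\<Sum>x\<leftarrow>D. z x) :: real^'k))"
  by (simp add: proj_alg_def proj_sum_eq)

lemma dp_from_bound:
  fixes z :: "'x \<Rightarrow> real^'d::finite"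
  assumes C: "C > 0" and Ct: "Ct > 0" and sg: "sg > 0"
    and d0: "0 \<le> delta" and d1: "delta' > 0"
    and dps: "dp_sens (gauss_mech sg :: real^'k::finite \<Rightarrow> (real^'k) measure) eps delta Ct"
    and g: "measure (gamma_measure (real CARD('k) / 2) (2 * C\<^sup>2 / real CARD('k))) {..Ct\<^sup>2} \<ge> 1 - delta'"
    and hrel: "\<And>D D'. rel D D' \<Longrightarrow> norm ((\<Sum>x\<leftarrow>D. z x) - (\<Sum>x\<leftarrow>D'. z x)) \<le> C"
  shows "dp (proj_alg z sg :: 'x list \<Rightarrow> (real^'k) measure) rel eps (delta + delta')"
  unfolding dp_def
proof (intro allI impI ballI)
  fix D D' E assume r: "rel D D'" and E: "E \<in> sets (proj_alg z sg D :: (real^'k) measure)"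
  let ?M = "gauss_matrix :: ('d \<times> 'k \<Rightarrow> real) measure"
  have "sets (proj_alg z sg D :: (real^'k) measure) = sets borel"
    unfolding proj_alg_eq[where 'd='d] by (subst sets_bind) (auto simp: gm_space)
  with E have Eb: "E \<in> sets borel" by simp
  define v where "v = (\<Sum>x\<leftarrow>D. z x) - (\<Sum>x\<leftarrow>D'. z x)"
  have "measure ?M {P. norm ((\<chi> j. \<Sum>i\<in>UNIV. P (i, j) * v $ i) :: real^'k) \<le> Ct} \<ge> 1 - delta'"
    by (rule gm_prob_bound[OF C Ct d1 _ g]) (use hrel[OF r] in \<open>simp add: v_def\<close>)
  then have b: "measure ?M {P. norm (Lm P ((\<Sum>x\<leftarrow>D. z x) - (\<Sum>x\<leftarrow>D'. z x)) :: real^'k) \<le> Ct} \<ge> 1 - delta'"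
    by (simp add: Lm_def v_def)
  show "measure (proj_alg z sg D) E \<le> exp eps * measure (proj_alg z sg D') E + (delta + delta')"
    unfolding proj_alg_eq[where 'd='d]
    by (rule coupling[OF sg d0 d1 dps b Eb])
qed


lemma sum_list_remove:
  fixes z :: "'x \<Rightarrow> 'a::ab_group_add"
  assumes "i < length D"
  shows "(\<Sum>x\<leftarrow>D. z x) = (\<Sum>x\<leftarrow>take i D @ drop (Suc i) D. z x) + z (D ! i)"
proof -
  have "(\<Sum>x\<leftarrow>D. z x) = (\<Sum>x\<leftarrow>take i D @ D ! i # drop (Suc i) D. z x)"
    using id_take_nth_drop[OF assms] by simp
  then show ?thesis by (simp add: algebra_simps)
qed

lemma remadd_norm:
  fixes z :: "'x \<Rightarrow> real^'d::finite"
  assumes "\<forall>x. norm (z x) \<le> C" and "remadd_rel D D'"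
  shows "norm ((\<Sum>x\<leftarrow>D. z x) - (\<Sum>x\<leftarrow>D'. z x)) \<le> C"
  using assms(2) unfolding remadd_rel_def
proof (elim disjE exE conjE)
  fix i assume i: "i < length D" and D': "D' = take i D @ drop (Suc i) D"
  show ?thesis using sum_list_remove[OF i, of z] assms(1) D' by simp
next
  fix i assume i: "i < length D'" and D: "D = take i D' @ drop (Suc i) D'"
  show ?thesis using sum_list_remove[OF i, of z] assms(1) D by (simp add: norm_minus_commute)
qed

lemma subst_norm:
  fixes z :: "'x \<Rightarrow> real^'d::finite"
  assumes zC: "\<forall>x. norm (z x) \<le> C / 2" and r: "subst_rel D D'"
  shows "norm ((\<Sum>x\<leftarrow>D. z x) - (\<Sum>x\<leftarrow>D'. z x)) \<le> C"
proof -
  have len: "length D = length D'" and c: "card {i. i < length D \<and> D ! i \<noteq> D' ! i} = 1"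
    using r by (auto simp: subst_rel_def)
  then obtain i where I: "{i. i < length D \<and> D ! i \<noteq> D' ! i} = {i}" by (auto simp: card_1_singleton_iff)
  then have i: "i < length D" by auto
  have eq: "D ! n = D' ! n" if "n < length D" "n \<noteq> i" for n using I that by auto
  have "(\<Sum>x\<leftarrow>D. z x) - (\<Sum>x\<leftarrow>D'. z x) = (\<Sum>n\<in>{0..<length D}. z (D ! n) - z (D' ! n))"
    using len by (simp add: sum_list_sum_nth sum_subtractf)
  also have "\<dots> = (\<Sum>n\<in>{i}. z (D ! n) - z (D' ! n))"
    by (rule sum.mono_neutral_right) (use i eq in auto)
  also have "\<dots> = z (D ! i) - z (D' ! i)" by simp
  finally have "norm ((\<Sum>x\<leftarrow>D. z x) - (\<Sum>x\<leftarrow>D'. z x)) = norm (z (D ! i) - z (D' ! i))" by simp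
  also have "\<dots> \<le> norm (z (D ! i)) + norm (z (D' ! i))" by (rule norm_triangle_ineq4)
  also have "\<dots> \<le> C / 2 + C / 2" using zC by (intro add_mono) auto
  finally show ?thesis by simp
qed

theorem theorem2:
  fixes z :: "'x \<Rightarrow> real^'d"
    and C Ct sg eps delta delta' :: real
  assumes "C > 0" and "Ct > 0" and "sg > 0" and "eps > 0"
    and "0 \<le> delta" and "delta \<le> 1" and "delta' > 0"
    and "dp_sens (gauss_mech sg :: real^'k \<Rightarrow> (real^'k) measure) eps delta Ct"
    and "measure (gamma_measure (real CARD('k) / 2) (2 * C\<^sup>2 / real CARD('k))) {..Ct\<^sup>2}
           \<ge> 1 - delta'"
  shows "((\<forall>x. norm (z x) \<le> C) \<longrightarrow>
            dp (proj_alg z sg :: 'x list \<Rightarrow> (real^'k) measure) remadd_rel eps (delta + delta'))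
       \<and> ((\<forall>x. norm (z x) \<le> C / 2) \<longrightarrow>
            dp (proj_alg z sg :: 'x list \<Rightarrow> (real^'k) measure) subst_rel eps (delta + delta'))"
proof (intro conjI impI)
  assume zC: "\<forall>x. norm (z x) \<le> C"
  show "dp (proj_alg z sg :: 'x list \<Rightarrow> (real^'k) measure) remadd_rel eps (delta + delta')"
    by (rule dp_from_bound[OF assms(1,2,3,5,7,8,9)]) (rule remadd_norm[OF zC])
next
  assume zC: "\<forall>x. norm (z x) \<le> C / 2"
  show "dp (proj_alg z sg :: 'x list \<Rightarrow> (real^'k) measure) subst_rel eps (delta + delta')"
    by (rule dp_from_bound[OF assms(1,2,3,5,7,8,9)]) (rule subst_norm[OF zC])
qed


end
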